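(* Let $m\geq 2$ be an integer and $n'=2^{m-1}$. Then the number of subgroups of the direct product $\mathbb{Z}_2\times D_{2n'}$ is $$|L(\mathbb{Z}_2\times D_{2n'})|=5\sigma(n')+3\tau(n')-2n'-1.$$
   Context: $L(G)$ denotes the set of all subgroups of a group $G$. $D_{2n'}=\langle x,y\mid x^{n'}=y^2=e,\ y^{-1}xy=x^{-1}\rangle$ is the dihedral group of order $2n'$ (for $n'=2$ this is the Klein four-group). For a positive integer $k$, $\tau(k)$ is the number of positive divisors of $k$ and $\sigma(k)$ is their sum. *)

theory Defs
  imports "HOL-Algebra.Algebra"
begin

text \<open>Dihedral group D_{2n} of order 2n: the element (i, a) stands for x^i y^a
  (0 <= i < n, a a boolean exponent of y), with x^n = y^2 = e and y^-1 x y = x^-1, so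
  (x^i y^a)(x^j y^b) = x^(i + (-1)^a j) y^(a+b).\<close>
definition dihedral_group :: "nat \<Rightarrow> (nat \<times> bool) monoid" where
  "dihedral_group n =
     \<lparr>carrier = {0..<n} \<times> UNIV,
      monoid.mult = (\<lambda>(i, a) (j, b). ((if a then i + n - j else i + j) mod n, a \<noteq> b)),
      one = (0, False)\<rparr>"

definition subgroup_lattice :: "('a, 'b) monoid_scheme \<Rightarrow> 'a set set" where
  "subgroup_lattice G = {H. subgroup H G}"

definition num_divisors :: "nat \<Rightarrow> nat" where
  "num_divisors k = card {d. d dvd k}"

definition sum_divisors :: "nat \<Rightarrow> nat" where
  "sum_divisors k = (\<Sum>d\<in>{d. d dvd k}. d)"

end

theory Submission
  imports Defs
begin



lemma dmult: "(i, a) \<otimes>\<^bsub>dihedral_group n\<^esub> (j, b) = ((if a then i + n - j else i + j) mod n, a \<noteq> b)"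
  by (simp add: dihedral_group_def)

lemma dcarr: "carrier (dihedral_group n) = {0..<n} \<times> UNIV"
  by (simp add: dihedral_group_def)

lemma d_one: "\<one>\<^bsub>dihedral_group n\<^esub> = (0, False)"
  by (simp add: dihedral_group_def)

lemma modint: "j < n \<Longrightarrow> int ((i + n - j) mod n) = (int i - int j) mod int n"
proof -
  assume "j < n"
  then have "int (i + n - j) = int i - int j + int n" by simp
  then show ?thesis by (metis mod_add_self2 zmod_int)
qed

lemma modint2: "int ((i + j) mod n) = (int i + int j) mod int n"
  by (simp add: zmod_int)

lemma grpD: assumes "n > 0" shows "group (dihedral_group n)"
proof (rule groupI)
  fix x y assume "x \<in> carrier (dihedral_group n)" "y \<in> carrier (dihedral_group n)"
  then show "x \<otimes>\<^bsub>dihedral_group n\<^esub> y \<in> carrier (dihedral_group n)"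
    using assms by (cases x; cases y) (auto simp: dmult dcarr)
next
  show "\<one>\<^bsub>dihedral_group n\<^esub> \<in> carrier (dihedral_group n)" using assms by (simp add: d_one dcarr)
next
  fix x assume "x \<in> carrier (dihedral_group n)"
  then show "\<one>\<^bsub>dihedral_group n\<^esub> \<otimes>\<^bsub>dihedral_group n\<^esub> x = x"
    by (cases x) (auto simp: dmult dcarr d_one)
next
  fix x assume "x \<in> carrier (dihedral_group n)"
  then obtain i a where x: "x = (i, a)" "i < n" by (cases x) (auto simp: dcarr)
  show "\<exists>y\<in>carrier (dihedral_group n). y \<otimes>\<^bsub>dihedral_group n\<^esub> x = \<one>\<^bsub>dihedral_group n\<^esub>"
  proof (cases a)
    case True
    then show ?thesis using x by (intro bexI[of _ "(i, True)"]) (simp_all add: dmult dcarr d_one)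
  next
    case False
    then show ?thesis using x assms by (intro bexI[of _ "((n - i) mod n, False)"]) (simp_all add: dmult dcarr d_one mod_add_left_eq)
  qed
next
  fix x y z assume "x \<in> carrier (dihedral_group n)" "y \<in> carrier (dihedral_group n)" "z \<in> carrier (dihedral_group n)"
  then obtain i a j b k c where xyz: "x = (i, a)" "y = (j, b)" "z = (k, c)" "i < n" "j < n" "k < n"
    by (auto simp: dcarr)
  have m: "j < n \<Longrightarrow> k < n \<Longrightarrow> (j + n - k) mod n < n" for j k using assms by simp
  define sg :: "bool \<Rightarrow> int" where "sg a = (if a then -1 else 1)" for a
  have key: "int ((if a then i + n - j else i + j) mod n) = (int i + sg a * int j) mod int n"
    if "j < n" for i j a using that by (cases a) (auto simp: sg_def modint modint2)
  have sgx: "sg (a \<noteq> b) = sg a * sg b" for a b by (auto simp: sg_def)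
  have lt: "(if a then i + n - j else i + j) mod n < n" for i j a using assms by simp
  have "int ((if a \<noteq> b then (if a then i + n - j else i + j) mod n + n - k else (if a then i + n - j else i + j) mod n + k) mod n)
      = (int i + sg a * int j + sg a * sg b * int k) mod int n"
    by (subst key, simp add: xyz, subst key, simp add: xyz, simp add: mod_add_left_eq, cases a; cases b; simp add: sg_def)
  moreover have "int ((if a then i + n - (if b then j + n - k else j + k) mod n else i + (if b then j + n - k else j + k) mod n) mod n)
      = (int i + sg a * int j + sg a * sg b * int k) mod int n"
    apply (subst key, simp add: lt)
    apply (subst key, simp add: xyz)
    apply (subst mod_add_right_eq[symmetric], subst mod_mult_right_eq, subst mod_add_right_eq)
    by (simp add: algebra_simps)
  ultimately show "x \<otimes>\<^bsub>dihedral_group n\<^esub> y \<otimes>\<^bsub>dihedral_group n\<^esub> z = x \<otimes>\<^bsub>dihedral_group n\<^esub> (y \<otimes>\<^bsub>dihedral_group n\<^esub> z)"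
    unfolding xyz dmult by auto
qed

abbreviation GG :: "nat \<Rightarrow> (int \<times> nat \<times> bool) monoid" where
  "GG n \<equiv> integer_mod_group 2 \<times>\<times> dihedral_group n"

lemma Gmult: "(c1, (x1, a1)) \<otimes>\<^bsub>GG n\<^esub> (c2, (x2, a2)) = ((c1 + c2) mod 2, ((if a1 then x1 + n - x2 else x1 + x2) mod n, a1 \<noteq> a2))"
  by (simp add: dmult)

lemma Gcarr: "carrier (GG n) = {0..<2} \<times> ({0..<n} \<times> UNIV)"
  by (simp add: carrier_integer_mod_group dcarr)

lemma Gone: "\<one>\<^bsub>GG n\<^esub> = (0, (0, False))"
  by (simp add: d_one)

lemma grpG: "n > 0 \<Longrightarrow> group (GG n)"
  by (simp add: DirProd_group grpD)

lemma dinv: assumes "n > 0" "x < n" shows "inv\<^bsub>dihedral_group n\<^esub> (x, a) = (if a then x else (n - x) mod n, a)"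
proof (rule group.inv_equality[OF grpD[OF assms(1)]])
  show "(if a then x else (n - x) mod n, a) \<otimes>\<^bsub>dihedral_group n\<^esub> (x, a) = \<one>\<^bsub>dihedral_group n\<^esub>"
    using assms by (cases a) (simp_all add: dmult d_one mod_add_left_eq)
qed (use assms in \<open>auto simp: dcarr\<close>)

lemma Ginv: assumes "n > 0" "0 \<le> c" "c < 2" "x < n"
  shows "inv\<^bsub>GG n\<^esub> (c, (x, a)) = (c, (if a then x else (n - x) mod n, a))"
proof -
  have "c = 0 \<or> c = 1" using assms by auto
  then have "(- c) mod 2 = c" by auto
  then show ?thesis using assms
    by (subst inv_DirProd) (simp_all add: grpD dinv carrier_integer_mod_group dcarr)
qed

lemma sg_carr: "subgroup H (GG n) \<Longrightarrow> (c, (x, a)) \<in> H \<Longrightarrow> 0 \<le> c \<and> c < 2 \<and> x < n"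
proof -
  assume h: "subgroup H (GG n)" "(c, (x, a)) \<in> H"
  have "(c, (x, a)) \<in> carrier (GG n)" using subgroup.subset[OF h(1)] h(2) by blast
  then show ?thesis by (simp only: Gcarr) auto
qed

lemma sg_mult: "subgroup H (GG n) \<Longrightarrow> (c1, (x1, a1)) \<in> H \<Longrightarrow> (c2, (x2, a2)) \<in> H \<Longrightarrow>
   ((c1 + c2) mod 2, ((if a1 then x1 + n - x2 else x1 + x2) mod n, a1 \<noteq> a2)) \<in> H"
  using subgroup.m_closed[of H "GG n" "(c1, (x1, a1))" "(c2, (x2, a2))"] by (simp only: Gmult)

lemma sg_inv: "n > 0 \<Longrightarrow> subgroup H (GG n) \<Longrightarrow> (c, (x, a)) \<in> H \<Longrightarrow> (c, (if a then x else (n - x) mod n, a)) \<in> H"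
proof -
  assume h: "n > 0" "subgroup H (GG n)" "(c, (x, a)) \<in> H"
  have "inv\<^bsub>GG n\<^esub> (c, (x, a)) \<in> H" using subgroup.m_inv_closed[OF h(2,3)] .
  moreover have "inv\<^bsub>GG n\<^esub> (c, (x, a)) = (c, (if a then x else (n - x) mod n, a))"
    using sg_carr[OF h(2,3)] h(1) by (intro Ginv) auto
  ultimately show ?thesis by (simp only:)
qed

lemma sg_one: "subgroup H (GG n) \<Longrightarrow> (0, (0, False)) \<in> H"
  using subgroup.one_closed[of H "GG n"] by (simp only: Gone)

lemma grp_cancel: assumes "group G" "subgroup H G" "g \<in> H" "h \<in> carrier G"
  shows "h \<otimes>\<^bsub>G\<^esub> g \<in> H \<longleftrightarrow> h \<in> H"
proof
  have gc: "g \<in> carrier G" using subgroup.subset[OF assms(2)] assms(3) by (rule subsetD)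
  have ic: "inv\<^bsub>G\<^esub> g \<in> carrier G" using group.inv_closed[OF assms(1) gc] .
  have e: "(h \<otimes>\<^bsub>G\<^esub> g) \<otimes>\<^bsub>G\<^esub> inv\<^bsub>G\<^esub> g = h"
  proof -
    have "(h \<otimes>\<^bsub>G\<^esub> g) \<otimes>\<^bsub>G\<^esub> inv\<^bsub>G\<^esub> g = h \<otimes>\<^bsub>G\<^esub> (g \<otimes>\<^bsub>G\<^esub> inv\<^bsub>G\<^esub> g)"
      using monoid.m_assoc[OF group.is_monoid[OF assms(1)] assms(4) gc ic] .
    also have "\<dots> = h \<otimes>\<^bsub>G\<^esub> \<one>\<^bsub>G\<^esub>" using group.r_inv[OF assms(1) gc] by (simp only:)
    also have "\<dots> = h" using monoid.r_one[OF group.is_monoid[OF assms(1)] assms(4)] .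
    finally show ?thesis .
  qed
  assume "h \<otimes>\<^bsub>G\<^esub> g \<in> H"
  then have "(h \<otimes>\<^bsub>G\<^esub> g) \<otimes>\<^bsub>G\<^esub> inv\<^bsub>G\<^esub> g \<in> H"
    using subgroup.m_closed[OF assms(2) _ subgroup.m_inv_closed[OF assms(2,3)]] by blast
  then show "h \<in> H" using e by (simp only:)
next
  assume "h \<in> H" then show "h \<otimes>\<^bsub>G\<^esub> g \<in> H" using subgroup.m_closed[OF assms(2) _ assms(3)] by blast
qed

lemma sg_cancel: assumes "n > 0" "subgroup H (GG n)" "(c1, (x1, a1)) \<in> H" "0 \<le> c" "c < 2" "x < n"
  shows "((c + c1) mod 2, ((if a then x + n - x1 else x + x1) mod n, a \<noteq> a1)) \<in> H \<longleftrightarrow> (c, (x, a)) \<in> H"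
proof -
  have cc: "(c, (x, a)) \<in> carrier (GG n)" using assms by (simp only: Gcarr) auto
  have "(c, (x, a)) \<otimes>\<^bsub>GG n\<^esub> (c1, (x1, a1)) \<in> H \<longleftrightarrow> (c, (x, a)) \<in> H"
    by (rule grp_cancel[OF grpG[OF assms(1)] assms(2) assms(3) cc])
  then show ?thesis by (simp only: Gmult)
qed




lemma zn_sub:
  fixes K :: "nat set"
  assumes n: "n > 0" and z: "0 \<in> K" and sub: "K \<subseteq> {..<n}"
    and add: "\<And>x y. x \<in> K \<Longrightarrow> y \<in> K \<Longrightarrow> (x + y) mod n \<in> K"
    and neg: "\<And>x. x \<in> K \<Longrightarrow> (n - x) mod n \<in> K"
  shows "\<exists>d. d dvd n \<and> d > 0 \<and> K = {x. x < n \<and> d dvd x}"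
proof -
  define S where "S = insert n {x\<in>K. 0 < x}"
  define d where "d = Min S"
  have finS: "finite S" unfolding S_def using sub finite_subset by (metis (no_types, lifting) finite_insert finite_lessThan mem_Collect_eq subsetI subset_iff)
  have dS: "d \<in> S" unfolding d_def by (rule Min_in[OF finS]) (simp add: S_def)
  have dmin: "\<And>x. x \<in> K \<Longrightarrow> 0 < x \<Longrightarrow> d \<le> x" unfolding d_def using finS by (simp add: S_def)
  have dn: "d \<le> n" unfolding d_def using finS by (simp add: S_def)
  have dpos: "d > 0" using dS n by (auto simp: S_def)
  have Kn: "\<And>x. x \<in> K \<Longrightarrow> x < n" using sub by auto
  have mult: "(q * d) mod n \<in> K" if "d \<in> K" for q
  proof (induction q)
    case 0 then show ?case using z by simp
  next
    case (Suc q)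
    have "(Suc q * d) mod n = (d + (q * d) mod n) mod n" by (metis mod_add_right_eq mult_Suc)
    then show ?case using add[OF Suc that] by (metis add.commute)
  qed
  have subt: "x - y \<in> K" if "x \<in> K" "y \<in> K" "y \<le> x" for x y
  proof (cases "y = 0")
    case True then show ?thesis using that by simp
  next
    case False
    have yn: "y < n" "x < n" using Kn that by auto
    then have e1: "(n - y) mod n = n - y" using False by simp
    have e0: "x + (n - y) = (x - y) + n" using that yn by arith
    have e2: "(x + (n - y)) mod n = x - y"
      unfolding e0 using yn by (simp only: mod_add_self2) (simp add: less_imp_diff_less)
    show ?thesis using add[OF that(1) neg[OF that(2)]] unfolding e1 e2 .
  qed
  show ?thesis
  proof (cases "d = n")
    case True
    have "K = {0}"
    proof -
      have "x = 0" if "x \<in> K" for x using dmin[OF that] Kn[OF that] True by (cases "x = 0") auto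
      then show ?thesis using z by auto
    qed
    moreover have "{x. x < n \<and> n dvd x} = {0}" using n by (auto dest: dvd_imp_le)
    ultimately show ?thesis using True n by (intro exI[of _ n]) auto
  next
    case False
    then have dK: "d \<in> K" using dS by (auto simp: S_def)
    have dd: "d dvd n"
    proof (rule ccontr)
      assume nd: "\<not> d dvd n"
      define r where "r = n mod d"
      define q where "q = n div d"
      have r0: "0 < r" "r < d" using nd dpos by (auto simp: r_def dvd_eq_mod_eq_0)
      have nq: "n = q * d + r" by (simp add: q_def r_def)
      have "((q + 1) * d) mod n = d - r"
      proof -
        have "(q + 1) * d = (d - r) + n" using nq r0 by (simp add: algebra_simps)
        moreover have "d - r < n" using dn r0 by simp
        ultimately show ?thesis by simp
      qed
      then have "d - r \<in> K" using mult[OF dK, of "q+1"] by simp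
      then have "d \<le> d - r" using dmin r0 by simp
      then show False using r0 by simp
    qed
    have "K = {x. x < n \<and> d dvd x}"
    proof (intro Set.set_eqI iffI)
      fix x assume xK: "x \<in> K"
      define y where "y = (x div d) * d"
      have yx: "y \<le> x" by (simp add: y_def)
      have "y mod n = y" using yx Kn[OF xK] by simp
      then have yK: "y \<in> K" using mult[OF dK, of "x div d"] by (simp add: y_def)
      have "x - y = x mod d" by (simp add: y_def minus_div_mult_eq_mod)
      then have "x mod d \<in> K" using subt[OF xK yK yx] by simp
      then have "x mod d = 0" using dmin[of "x mod d"] dpos mod_less_divisor[OF dpos, of x] by (cases "x mod d = 0") auto
      then show "x \<in> {x. x < n \<and> d dvd x}" using Kn[OF xK] by auto
    next
      fix x assume "x \<in> {x. x < n \<and> d dvd x}"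
      then obtain q where "x = q * d" "x < n" by (metis (mono_tags, lifting) dvdE mem_Collect_eq mult.commute)
      then show "x \<in> K" using mult[OF dK, of q] by simp
    qed
    then show ?thesis using dd dpos by blast
  qed
qed



definition jv :: "int option \<Rightarrow> int" where "jv \<alpha> = (case \<alpha> of None \<Rightarrow> 0 | Some j \<Rightarrow> j)"

definition mk :: "nat \<Rightarrow> nat \<times> int option \<times> (int \<times> int) option \<Rightarrow> (int \<times> nat \<times> bool) set" where
  "mk n p = (case p of (d, \<alpha>, \<beta>) \<Rightarrow> {(c, x, a). 0 \<le> c \<and> c < 2 \<and> x < n \<and>
     (if a then (case \<beta> of None \<Rightarrow> False | Some (c0, r) \<Rightarrow> (\<alpha> = None \<longrightarrow> c = c0) \<and> int d dvd int x - r - c * jv \<alpha>)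
      else ((\<alpha> = None \<longrightarrow> c = 0) \<and> int d dvd int x - c * jv \<alpha>))})"

definition Aset :: "nat \<Rightarrow> int option set" where
  "Aset d = insert None (Some ` {j. 0 \<le> j \<and> j < int d \<and> int d dvd 2 * j})"

definition Bset :: "nat \<Rightarrow> int option \<Rightarrow> (int \<times> int) option set" where
  "Bset d \<alpha> = insert None (Some ` ({0..<(if \<alpha> = None then 2 else 1)} \<times> {0..<int d}))"

definition params :: "nat \<Rightarrow> (nat \<times> int option \<times> (int \<times> int) option) set" where
  "params n = (SIGMA d:{d. d dvd n}. SIGMA \<alpha>:Aset d. Bset d \<alpha>)"

lemma modd: "(d::int) dvd n \<Longrightarrow> d dvd (a mod n - a)"
proof -
  assume "d dvd n"
  moreover have "a mod n - a = - (a div n * n)" using mod_div_mult_eq[of a n] by linarith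
  ultimately show ?thesis by simp
qed

lemma P1: "d dvd n \<Longrightarrow> int d dvd int ((x1 + x2) mod n) - (int x1 + int x2)"
  unfolding modint2 by (rule modd) simp

lemma P2: "d dvd n \<Longrightarrow> x2 < n \<Longrightarrow> int d dvd int ((x1 + n - x2) mod n) - (int x1 - int x2)"
  by (simp only: modint) (rule modd, simp)

lemma dcomb: "(d::int) dvd A \<Longrightarrow> d dvd B \<Longrightarrow> d dvd C \<Longrightarrow> d dvd D \<Longrightarrow> e = A + s * B + t * C + k * D \<Longrightarrow> d dvd e"
  by simp


lemma mkF: "(c, (x, False)) \<in> mk n (d, \<alpha>, \<beta>) \<longleftrightarrow> 0 \<le> c \<and> c < 2 \<and> x < n \<and> (\<alpha> = None \<longrightarrow> c = 0) \<and> int d dvd int x - c * jv \<alpha>"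
  by (simp add: mk_def)

lemma mkT: "(c, (x, True)) \<in> mk n (d, \<alpha>, \<beta>) \<longleftrightarrow> 0 \<le> c \<and> c < 2 \<and> x < n \<and>
   (case \<beta> of None \<Rightarrow> False | Some (c0, r) \<Rightarrow> (\<alpha> = None \<longrightarrow> c = c0) \<and> int d dvd int x - r - c * jv \<alpha>)"
  by (simp add: mk_def)

lemma mkT': "(c, (x, True)) \<in> mk n (d, \<alpha>, Some (c0, r)) \<longleftrightarrow> 0 \<le> c \<and> c < 2 \<and> x < n \<and>
   (\<alpha> = None \<longrightarrow> c = c0) \<and> int d dvd int x - r - c * jv \<alpha>"
  by (simp add: mk_def)

lemma mkTN: "(c, (x, True)) \<notin> mk n (d, \<alpha>, None)"
  by (simp add: mk_def)

lemma Cf: "0 \<le> (c1::int) \<Longrightarrow> c1 < 2 \<Longrightarrow> 0 \<le> c2 \<Longrightarrow> c2 < 2 \<Longrightarrow> (c1 + c2) mod 2 = c1 + c2 - 2 * c1 * c2"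
proof -
  assume "0 \<le> c1" "c1 < 2" "0 \<le> c2" "c2 < 2"
  then have "c1 = 0 \<or> c1 = 1" "c2 = 0 \<or> c2 = 1" by auto
  then show ?thesis by auto
qed

lemma params_jv: "(d, \<alpha>, \<beta>) \<in> params n \<Longrightarrow> int d dvd 2 * jv \<alpha>"
  by (auto simp: params_def Aset_def jv_def)

lemma params_d: "(d, \<alpha>, \<beta>) \<in> params n \<Longrightarrow> d dvd n"
  by (auto simp: params_def)

lemma params_c0: "(d, \<alpha>, Some (c0, r)) \<in> params n \<Longrightarrow> 0 \<le> c0 \<and> c0 < 2 \<and> (\<alpha> \<noteq> None \<longrightarrow> c0 = 0) \<and> 0 \<le> r \<and> r < int d"
  by (auto simp: params_def Bset_def split: if_splits)

lemma T1_mult: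
  assumes p: "(d, \<alpha>, \<beta>) \<in> params n" and n: "n > 0"
    and u: "(c1, (x1, a1)) \<in> mk n (d, \<alpha>, \<beta>)" and v: "(c2, (x2, a2)) \<in> mk n (d, \<alpha>, \<beta>)"
  shows "((c1 + c2) mod 2, ((if a1 then x1 + n - x2 else x1 + x2) mod n, a1 \<noteq> a2)) \<in> mk n (d, \<alpha>, \<beta>)"
proof -
  have hd: "d dvd n" using params_d[OF p] .
  have hj: "int d dvd 2 * jv \<alpha>" using params_jv[OF p] .
  have cr: "0 \<le> c1" "c1 < 2" "x1 < n" "0 \<le> c2" "c2 < 2" "x2 < n"
    using u v by (cases a1; cases a2; simp add: mk_def)+
  have Cf1: "(c1 + c2) mod 2 = c1 + c2 - 2 * c1 * c2" using Cf cr by blast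
  have bnd: "0 \<le> (c1 + c2) mod 2" "(c1 + c2) mod 2 < 2" "(if a1 then x1 + n - x2 else x1 + x2) mod n < n"
    using n by auto
  show ?thesis
  proof (cases a1)
    case False
    note a1 = False
    have h1: "\<alpha> = None \<longrightarrow> c1 = 0" "int d dvd int x1 - c1 * jv \<alpha>" using u a1 by (simp_all add: mkF)
    show ?thesis
    proof (cases a2)
      case False
      have h2: "\<alpha> = None \<longrightarrow> c2 = 0" "int d dvd int x2 - c2 * jv \<alpha>" using v False by (simp_all add: mkF)
      have "int d dvd int ((x1 + x2) mod n) - (c1 + c2) mod 2 * jv \<alpha>"
        by (rule dcomb[OF P1[OF hd, of x1 x2] h1(2) h2(2) hj, where s=1 and t=1 and k="c1 * c2"]) (simp add: Cf1 algebra_simps)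
      then show ?thesis using a1 False bnd h1 h2 by (simp add: mkF)
    next
      case True
      then obtain c0 r where b: "\<beta> = Some (c0, r)" using v by (cases \<beta>) (auto simp: mkTN)
      have h2: "\<alpha> = None \<longrightarrow> c2 = c0" "int d dvd int x2 - r - c2 * jv \<alpha>" using v True b by (simp_all add: mkT')
      have "int d dvd int ((x1 + x2) mod n) - r - (c1 + c2) mod 2 * jv \<alpha>"
        by (rule dcomb[OF P1[OF hd, of x1 x2] h1(2) h2(2) hj, where s=1 and t=1 and k="c1 * c2"]) (simp add: Cf1 algebra_simps)
      moreover have "\<alpha> = None \<longrightarrow> (c1 + c2) mod 2 = c0" using h1 h2 cr by auto
      ultimately show ?thesis using a1 True bnd b by (simp add: mkT')
    qed
  next
    case True
    note a1 = True
    then obtain c0 r where b: "\<beta> = Some (c0, r)" using u by (cases \<beta>) (auto simp: mkTN)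
    have h1: "\<alpha> = None \<longrightarrow> c1 = c0" "int d dvd int x1 - r - c1 * jv \<alpha>" using u a1 b by (simp_all add: mkT')
    show ?thesis
    proof (cases a2)
      case False
      have h2: "\<alpha> = None \<longrightarrow> c2 = 0" "int d dvd int x2 - c2 * jv \<alpha>" using v False by (simp_all add: mkF)
      have "int d dvd int ((x1 + n - x2) mod n) - r - (c1 + c2) mod 2 * jv \<alpha>"
        by (rule dcomb[OF P2[OF hd cr(6), of x1] h1(2) h2(2) hj, where s=1 and t="-1" and k="c1 * c2 - c2"]) (simp add: Cf1 algebra_simps)
      moreover have "\<alpha> = None \<longrightarrow> (c1 + c2) mod 2 = c0" using h1 h2 cr by auto
      ultimately show ?thesis using a1 False bnd b by (simp add: mkT')
    next
      case True
      have h2: "\<alpha> = None \<longrightarrow> c2 = c0" "int d dvd int x2 - r - c2 * jv \<alpha>" using v True b by (simp_all add: mkT')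
      have "int d dvd int ((x1 + n - x2) mod n) - (c1 + c2) mod 2 * jv \<alpha>"
        by (rule dcomb[OF P2[OF hd cr(6), of x1] h1(2) h2(2) hj, where s=1 and t="-1" and k="c1 * c2 - c2"]) (simp add: Cf1 algebra_simps)
      moreover have "\<alpha> = None \<longrightarrow> (c1 + c2) mod 2 = 0" using h1 h2 cr by auto
      ultimately show ?thesis using a1 True bnd by (simp add: mkF)
    qed
  qed
qed


lemma T1:
  assumes p: "p \<in> params n" and n: "n > 0"
  shows "subgroup (mk n p) (GG n)"
proof -
  obtain d \<alpha> \<beta> where pp: "p = (d, \<alpha>, \<beta>)" by (cases p) auto
  have p': "(d, \<alpha>, \<beta>) \<in> params n" using p pp by simp
  have hd: "d dvd n" using params_d[OF p'] .
  have hj: "int d dvd 2 * jv \<alpha>" using params_jv[OF p'] .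
  show ?thesis unfolding pp
  proof (rule subgroup.intro)
    show "mk n (d, \<alpha>, \<beta>) \<subseteq> carrier (GG n)" unfolding Gcarr by (auto simp: mk_def)
  next
    fix u v assume "u \<in> mk n (d, \<alpha>, \<beta>)" "v \<in> mk n (d, \<alpha>, \<beta>)"
    then show "u \<otimes>\<^bsub>GG n\<^esub> v \<in> mk n (d, \<alpha>, \<beta>)"
      using T1_mult[OF p' n] by (cases u; cases v) (simp only: Gmult)
  next
    show "\<one>\<^bsub>GG n\<^esub> \<in> mk n (d, \<alpha>, \<beta>)" using n by (simp add: d_one mkF)
  next
    fix u assume u: "u \<in> mk n (d, \<alpha>, \<beta>)"
    obtain c x a where ux: "u = (c, (x, a))" by (cases u) auto
    have cr: "0 \<le> c" "c < 2" "x < n" using u ux by (auto simp: mk_def)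
    have "(c, (if a then x else (n - x) mod n, a)) \<in> mk n (d, \<alpha>, \<beta>)"
    proof (cases a)
      case True then show ?thesis using u ux by simp
    next
      case False
      have h1: "\<alpha> = None \<longrightarrow> c = 0" "int d dvd int x - c * jv \<alpha>" using u ux False by (simp_all add: mkF)
      have "int d dvd int ((0 + n - x) mod n) - c * jv \<alpha>"
        by (rule dcomb[OF P2[OF hd cr(3), of 0] h1(2) h1(2) hj, where s="-1" and t=0 and k="-c"]) (simp add: algebra_simps)
      then show ?thesis using False h1 cr n by (simp add: mkF)
    qed
    then show "inv\<^bsub>GG n\<^esub> u \<in> mk n (d, \<alpha>, \<beta>)" using Ginv[OF n cr] ux by simp
  qed
qed




lemma int_lt_dvd_eq: "0 \<le> a \<Longrightarrow> a < d \<Longrightarrow> 0 \<le> b \<Longrightarrow> b < (d::int) \<Longrightarrow> d dvd a - b \<Longrightarrow> a = b"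
proof (rule ccontr)
  assume h: "0 \<le> a" "a < d" "0 \<le> b" "b < d" "d dvd a - b" "a \<noteq> b"
  then have "\<bar>d\<bar> \<le> \<bar>a - b\<bar>" by (intro dvd_imp_le_int) auto
  then show False using h by linarith
qed

lemma d_eq: assumes "d1 dvd n" "d2 dvd n" "n > 0" "\<And>x. x < n \<Longrightarrow> (int d1 dvd int x \<longleftrightarrow> int d2 dvd int x)"
  shows "d1 = d2"
proof -
  have gen: "a dvd b" if "a dvd n" "b dvd n" "\<And>x. x < n \<Longrightarrow> (int a dvd int x \<longleftrightarrow> int b dvd int x)" for a b
  proof (cases "b < n")
    case True then show ?thesis using that(3)[of b] by simp
  next
    case False
    then have "b = n" using dvd_imp_le[OF that(2) assms(3)] by simp
    then show ?thesis using that(1) by simp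
  qed
  show ?thesis using gen[OF assms(1,2) assms(4)] gen[OF assms(2,1)] assms(4) by (simp add: dvd_antisym)
qed

lemma params_dpos: "(d, \<alpha>, \<beta>) \<in> params n \<Longrightarrow> n > 0 \<Longrightarrow> 0 < d \<and> d \<le> n"
proof -
  assume a: "(d, \<alpha>, \<beta>) \<in> params n" "n > 0"
  have "d dvd n" using params_d[OF a(1)] .
  then show ?thesis using a(2) by (cases "d = 0") (auto dest: dvd_imp_le)
qed

lemma params_j: "(d, Some j, \<beta>) \<in> params n \<Longrightarrow> 0 \<le> j \<and> j < int d"
  by (auto simp: params_def Aset_def)

lemma helperA:
  assumes n: "n > 0" and p1: "(d, \<alpha>1, \<beta>1) \<in> params n" and p2: "(d, \<alpha>2, \<beta>2) \<in> params n"
    and sub: "mk n (d, \<alpha>1, \<beta>1) \<subseteq> mk n (d, \<alpha>2, \<beta>2)" and a1: "\<alpha>1 = Some j"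
  shows "\<alpha>2 = Some j"
proof -
  have j: "0 \<le> j" "j < int d" using params_j p1 a1 by blast+
  have dn: "d \<le> n" using params_dpos[OF p1 n] by simp
  have "(1, (nat j, False)) \<in> mk n (d, \<alpha>1, \<beta>1)" using j dn a1 by (simp add: mkF jv_def)
  then have m: "(1, (nat j, False)) \<in> mk n (d, \<alpha>2, \<beta>2)" using sub by blast
  then obtain j2 where a2: "\<alpha>2 = Some j2" by (cases \<alpha>2) (auto simp: mkF)
  have j2: "0 \<le> j2" "j2 < int d" using params_j p2 a2 by blast+
  have "int d dvd j - j2" using m a2 j by (simp add: mkF jv_def)
  then show ?thesis using int_lt_dvd_eq[OF j j2] a2 by simp
qed

lemma c0jv: "(d, \<alpha>, Some (c0, r)) \<in> params n \<Longrightarrow> c0 * jv \<alpha> = 0"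
  using params_c0 by (cases \<alpha>) (auto simp: jv_def)

lemma helperB:
  assumes n: "n > 0" and p1: "(d, \<alpha>, \<beta>1) \<in> params n" and p2: "(d, \<alpha>, \<beta>2) \<in> params n"
    and sub: "mk n (d, \<alpha>, \<beta>1) \<subseteq> mk n (d, \<alpha>, \<beta>2)" and b1: "\<beta>1 = Some (c0, r)"
  shows "\<beta>2 = Some (c0, r)"
proof -
  have c: "0 \<le> c0" "c0 < 2" "\<alpha> \<noteq> None \<longrightarrow> c0 = 0" "0 \<le> r" "r < int d" using params_c0 p1 b1 by blast+
  have z: "c0 * jv \<alpha> = 0" using c0jv p1 b1 by blast
  have dn: "d \<le> n" using params_dpos[OF p1 n] by simp
  have "r < int n" using c dn by linarith
  then have nr: "nat r < n" using c by (simp add: nat_less_iff)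
  have "(c0, (nat r, True)) \<in> mk n (d, \<alpha>, \<beta>1)" using c nr b1 by (simp add: mkT' z)
  then have m: "(c0, (nat r, True)) \<in> mk n (d, \<alpha>, \<beta>2)" using sub by blast
  then obtain c0' r' where b2: "\<beta>2 = Some (c0', r')" by (cases \<beta>2) (auto simp: mkTN)
  have c': "0 \<le> c0'" "c0' < 2" "\<alpha> \<noteq> None \<longrightarrow> c0' = 0" "0 \<le> r'" "r' < int d" using params_c0 p2 b2 by blast+
  have m': "\<alpha> = None \<longrightarrow> c0 = c0'" "int d dvd r - r' - c0 * jv \<alpha>" using m b2 c by (simp_all add: mkT')
  have "c0 = c0'" using m'(1) c(3) c'(3) by blast
  moreover have "r = r'" using int_lt_dvd_eq[OF c(4,5) c'(4,5)] m'(2) z by simp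
  ultimately show ?thesis using b2 by simp
qed

lemma T2:
  assumes n: "n > 0" and p1: "p1 \<in> params n" and p2: "p2 \<in> params n" and eq: "mk n p1 = mk n p2"
  shows "p1 = p2"
proof -
  obtain d1 \<alpha>1 \<beta>1 where pp1: "p1 = (d1, \<alpha>1, \<beta>1)" by (cases p1) auto
  obtain d2 \<alpha>2 \<beta>2 where pp2: "p2 = (d2, \<alpha>2, \<beta>2)" by (cases p2) auto
  have q1: "(d1, \<alpha>1, \<beta>1) \<in> params n" using p1 pp1 by simp
  have q2: "(d2, \<alpha>2, \<beta>2) \<in> params n" using p2 pp2 by simp
  have e: "mk n (d1, \<alpha>1, \<beta>1) = mk n (d2, \<alpha>2, \<beta>2)" using eq pp1 pp2 by simp
  have "d1 = d2"
  proof (rule d_eq[OF params_d[OF q1] params_d[OF q2] n])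
    fix x assume "x < n"
    have "(0, (x, False)) \<in> mk n (d1, \<alpha>1, \<beta>1) \<longleftrightarrow> (0, (x, False)) \<in> mk n (d2, \<alpha>2, \<beta>2)" using e by simp
    then show "int d1 dvd int x \<longleftrightarrow> int d2 dvd int x" using \<open>x < n\<close> by (simp add: mkF)
  qed
  then have q2': "(d1, \<alpha>2, \<beta>2) \<in> params n" and e': "mk n (d1, \<alpha>1, \<beta>1) = mk n (d1, \<alpha>2, \<beta>2)" using q2 e by simp_all
  have "\<alpha>1 = \<alpha>2"
  proof (cases \<alpha>1)
    case None
    show ?thesis
    proof (cases \<alpha>2)
      case (Some j)
      then have "\<alpha>1 = Some j" using helperA[OF n q2' q1 equalityD2[OF e'] Some] by simp
      then show ?thesis using None by simp
    qed (simp add: None)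
  next
    case (Some j)
    then show ?thesis using helperA[OF n q1 q2' equalityD1[OF e'] Some] by simp
  qed
  then have q2'': "(d1, \<alpha>1, \<beta>2) \<in> params n" and e'': "mk n (d1, \<alpha>1, \<beta>1) = mk n (d1, \<alpha>1, \<beta>2)" using q2' e' by simp_all
  have "\<beta>1 = \<beta>2"
  proof (cases \<beta>1)
    case None
    show ?thesis
    proof (cases \<beta>2)
      case (Some cr)
      then obtain c r where "\<beta>2 = Some (c, r)" by (cases cr) auto
      then have "\<beta>1 = Some (c, r)" using helperB[OF n q2'' q1 equalityD2[OF e''] \<open>\<beta>2 = Some (c, r)\<close>] by simp
      then show ?thesis using None by simp
    qed (simp add: None)
  next
    case (Some cr)
    then obtain c r where "\<beta>1 = Some (c, r)" by (cases cr) auto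
    then show ?thesis using helperB[OF n q1 q2'' equalityD1[OF e''] \<open>\<beta>1 = Some (c, r)\<close>] by simp
  qed
  then show ?thesis using pp1 pp2 \<open>d1 = d2\<close> \<open>\<alpha>1 = \<alpha>2\<close> by simp
qed




lemma dvd_iff_diff: "(d::int) dvd a - b \<Longrightarrow> d dvd a \<longleftrightarrow> d dvd b"
proof
  assume h: "d dvd a - b" "d dvd a"
  have "b = a - (a - b)" by simp
  then show "d dvd b" using h by (metis dvd_diff)
next
  assume h: "d dvd a - b" "d dvd b"
  have "a = (a - b) + b" by simp
  then show "d dvd a" using h by (metis dvd_add)
qed

lemma T3:
  assumes n: "n > 0" and H: "subgroup H (GG n)"
  shows "\<exists>p\<in>params n. H = mk n p"
proof -
  define K where "K = {x. (0, (x, False)) \<in> H}"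
  have K0: "0 \<in> K" using sg_one[OF H] by (simp add: K_def)
  have Ksub: "K \<subseteq> {..<n}" using sg_carr[OF H] by (auto simp: K_def)
  have Kadd: "(x + y) mod n \<in> K" if "x \<in> K" "y \<in> K" for x y
    using sg_mult[OF H, of 0 x False 0 y False] that by (simp add: K_def)
  have Kneg: "(n - x) mod n \<in> K" if "x \<in> K" for x
    using sg_inv[OF n H, of 0 x False] that by (simp add: K_def)
  obtain d where hd: "d dvd n" "d > 0" "K = {x. x < n \<and> d dvd x}"
    using zn_sub[OF n K0 Ksub Kadd Kneg] by blast
  have F0: "(0, (x, False)) \<in> H \<longleftrightarrow> x < n \<and> int d dvd int x" for x
  proof -
    have "(0, (x, False)) \<in> H \<longleftrightarrow> x \<in> K" by (simp add: K_def)
    then show ?thesis using hd(3) by auto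
  qed
  define E1 where "E1 = (\<exists>x. (1, (x, False)) \<in> H)"
  define x1 where "x1 = (SOME x. (1, (x, False)) \<in> H)"
  define j where "j = int x1 mod int d"
  define \<alpha> where "\<alpha> = (if E1 then Some j else None)"
  have j0: "0 \<le> j" "j < int d" using hd(2) by (simp_all add: j_def)
  have jx: "int d dvd j - int x1" unfolding j_def by (rule modd) simp
  have E1x: "E1 \<Longrightarrow> (1, (x1, False)) \<in> H" unfolding E1_def x1_def by (rule someI_ex)
  have j2: "E1 \<Longrightarrow> int d dvd 2 * int x1"
  proof -
    assume "E1"
    then have "((1 + 1) mod 2, ((x1 + x1) mod n, False \<noteq> False)) \<in> H" using sg_mult[OF H E1x E1x] by simp
    then have "int d dvd int ((x1 + x1) mod n)" using F0 by simp
    then show ?thesis using dvd_iff_diff[OF P1[OF hd(1), of x1 x1]] by simp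
  qed
  have j2': "E1 \<Longrightarrow> int d dvd 2 * j"
    by (rule dcomb[OF j2 jx jx jx, where s=2 and t=0 and k=0]) simp_all
  have F1: "(1, (y, False)) \<in> H \<longleftrightarrow> y < n \<and> E1 \<and> int d dvd int y - j" for y
  proof (cases "y < n \<and> E1")
    case True
    then have "((1 + 1) mod 2, ((if False then y + n - x1 else y + x1) mod n, False \<noteq> False)) \<in> H \<longleftrightarrow> (1, (y, False)) \<in> H"
      using sg_cancel[OF n H E1x, of 1 y False] by simp
    then have "(1, (y, False)) \<in> H \<longleftrightarrow> int d dvd int ((y + x1) mod n)" using F0 n by simp
    also have "\<dots> \<longleftrightarrow> int d dvd int y + int x1" using dvd_iff_diff[OF P1[OF hd(1), of y x1]] by simp
    also have "\<dots> \<longleftrightarrow> int d dvd int y - j"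
      by (rule dvd_iff_diff, rule dcomb[OF j2 jx jx jx, where s=1 and t=0 and k=0]) (use True in simp_all)
    finally show ?thesis using True by simp
  next
    case False
    then show ?thesis using sg_carr[OF H, of 1 y False] by (auto simp: E1_def)
  qed
  have FC: "(c, (y, False)) \<in> H \<longleftrightarrow> 0 \<le> c \<and> c < 2 \<and> y < n \<and> (\<alpha> = None \<longrightarrow> c = 0) \<and> int d dvd int y - c * jv \<alpha>" for c y
  proof (cases "c = 0 \<or> c = 1")
    case True
    then show ?thesis
    proof
      assume "c = 0" then show ?thesis using F0 by simp
    next
      assume "c = 1" then show ?thesis using F1 by (auto simp: \<alpha>_def jv_def)
    qed
  next
    case False
    then have "\<not> (0 \<le> c \<and> c < 2)" by auto
    then show ?thesis using sg_carr[OF H, of c y False] by blast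
  qed
  define E2 where "E2 = (\<exists>c x. (c, (x, True)) \<in> H)"
  define t where "t = (SOME t. (fst t, (snd t, True)) \<in> H)"
  define c1 where "c1 = fst t"
  define xt where "xt = snd t"
  have E2t: "(c1, (xt, True)) \<in> H" if "E2"
  proof -
    from that obtain c x where "(c, (x, True)) \<in> H" by (auto simp: E2_def)
    then have "\<exists>t. (fst t, (snd t, True)) \<in> H" by (intro exI[of _ "(c, x)"]) simp
    then have "(fst t, (snd t, True)) \<in> H" unfolding t_def by (rule someI_ex)
    then show ?thesis by (simp add: c1_def xt_def)
  qed
  define c0 where "c0 = (if \<alpha> = None then c1 else 0)"
  define r where "r = (int xt - c1 * jv \<alpha>) mod int d"
  define \<beta> where "\<beta> = (if E2 then Some (c0, r) else None)"
  have hj: "int d dvd 2 * jv \<alpha>" using j2' by (cases E1) (simp_all add: \<alpha>_def jv_def)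
  have TC: "(c, (y, True)) \<in> H \<longleftrightarrow> (\<alpha> = None \<longrightarrow> c = c0) \<and> int d dvd int y - r - c * jv \<alpha>"
    if e2: "E2" and cb: "0 \<le> c" "c < 2" "y < n" for c y
  proof -
    have c1b: "0 \<le> c1" "c1 < 2" "xt < n" using sg_carr[OF H E2t[OF e2]] by auto
    have "((c + c1) mod 2, ((if True then y + n - xt else y + xt) mod n, True \<noteq> True)) \<in> H \<longleftrightarrow> (c, (y, True)) \<in> H"
      using sg_cancel[OF n H E2t[OF e2], of c y True] cb by simp
    then have "(c, (y, True)) \<in> H \<longleftrightarrow> ((c + c1) mod 2, ((y + n - xt) mod n, False)) \<in> H" by simp
    also have "\<dots> \<longleftrightarrow> (\<alpha> = None \<longrightarrow> (c + c1) mod 2 = 0) \<and> int d dvd int ((y + n - xt) mod n) - (c + c1) mod 2 * jv \<alpha>"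
      using FC n by simp
    also have "\<dots> \<longleftrightarrow> (\<alpha> = None \<longrightarrow> c = c0) \<and> int d dvd int y - r - c * jv \<alpha>"
    proof -
      have p1: "(\<alpha> = None \<longrightarrow> (c + c1) mod 2 = 0) \<longleftrightarrow> (\<alpha> = None \<longrightarrow> c = c0)"
      proof -
        have "c = 0 \<or> c = 1" "c1 = 0 \<or> c1 = 1" using cb c1b by auto
        then show ?thesis by (auto simp: c0_def)
      qed
      have Cf1: "(c + c1) mod 2 = c + c1 - 2 * c * c1" using Cf cb c1b by blast
      have A: "int d dvd int ((y + n - xt) mod n) - (int y - int xt)" using P2[OF hd(1) c1b(3)] .
      have B: "int d dvd r - (int xt - c1 * jv \<alpha>)" unfolding r_def by (rule modd) simp
      have p2: "int d dvd int ((y + n - xt) mod n) - (c + c1) mod 2 * jv \<alpha> \<longleftrightarrow> int d dvd int y - r - c * jv \<alpha>"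
        by (rule dvd_iff_diff, rule dcomb[OF A B hj hj, where s=1 and t=0 and k="c * c1 - c1"]) (unfold Cf1, simp add: algebra_simps)
      show ?thesis using p1 p2 by simp
    qed
    finally show ?thesis .
  qed
  have pin: "(d, \<alpha>, \<beta>) \<in> params n"
  proof -
    have "\<alpha> \<in> Aset d" using j0 j2' by (auto simp: \<alpha>_def Aset_def)
    moreover have "\<beta> \<in> Bset d \<alpha>"
    proof (cases E2)
      case True
      have c1b: "0 \<le> c1" "c1 < 2" using sg_carr[OF H E2t[OF True]] by auto
      have "0 \<le> r" "r < int d" using hd(2) by (simp_all add: r_def)
      then show ?thesis using True c1b by (auto simp: \<beta>_def Bset_def c0_def)
    qed (simp add: \<beta>_def Bset_def)
    ultimately show ?thesis using hd(1) by (simp add: params_def)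
  qed
  have "H = mk n (d, \<alpha>, \<beta>)"
  proof (rule Set.set_eqI)
    fix u :: "int \<times> nat \<times> bool"
    obtain c y a where u: "u = (c, (y, a))" by (cases u) auto
    show "u \<in> H \<longleftrightarrow> u \<in> mk n (d, \<alpha>, \<beta>)"
    proof (cases a)
      case False
      then show ?thesis using FC u by (simp add: mkF)
    next
      case True
      show ?thesis
      proof (cases "0 \<le> c \<and> c < 2 \<and> y < n")
        case cb: True
        show ?thesis
        proof (cases E2)
          case True
          then show ?thesis using TC[OF True] cb u \<open>a\<close> by (simp add: mkT' \<beta>_def)
        next
          case False
          then show ?thesis using u \<open>a\<close> by (auto simp: E2_def \<beta>_def mkTN)
        qed
      next
        case False
        then show ?thesis using u \<open>a\<close> sg_carr[OF H, of c y True] by (auto simp: mk_def)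
      qed
    qed
  qed
  then show ?thesis using pin by blast
qed



lemma lattice_eq: "n > 0 \<Longrightarrow> subgroup_lattice (GG n) = mk n ` params n"
  unfolding subgroup_lattice_def using T1 T3 by blast

lemma card_lattice: "n > 0 \<Longrightarrow> card (subgroup_lattice (GG n)) = card (params n)"
  by (simp add: lattice_eq card_image inj_on_def T2)

lemma card_B: "card (Bset d \<alpha>) = 1 + (if \<alpha> = None then 2 else 1) * d"
proof -
  have "card (Some ` ({0::int..<(if \<alpha> = None then 2 else 1)} \<times> {0..<int d})) = (if \<alpha> = None then 2 else 1) * d"
    by (simp add: card_image card_cartesian_product)
  then show ?thesis unfolding Bset_def by (simp add: card_insert_disjoint)
qed

definition J :: "nat \<Rightarrow> int set" where "J d = {j. 0 \<le> j \<and> j < int d \<and> int d dvd 2 * j}"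

lemma finite_J: "finite (J d)"
  unfolding J_def by (rule finite_subset[of _ "{0..<int d}"]) auto

lemma card_A: "(\<Sum>\<alpha>\<in>Aset d. card (Bset d \<alpha>)) = 1 + 2 * d + card (J d) * (1 + d)"
proof -
  have "(\<Sum>\<alpha>\<in>Aset d. card (Bset d \<alpha>)) = card (Bset d None) + (\<Sum>\<alpha>\<in>Some ` J d. card (Bset d \<alpha>))"
    unfolding Aset_def J_def[symmetric] using finite_J by (subst sum.insert) auto
  also have "(\<Sum>\<alpha>\<in>Some ` J d. card (Bset d \<alpha>)) = (\<Sum>j\<in>J d. card (Bset d (Some j)))"
    by (subst sum.reindex) auto
  finally show ?thesis by (simp add: card_B)
qed

lemma J1: "J 1 = {0}"
  by (auto simp: J_def)

lemma J2: assumes "e > 0" shows "J (2 ^ e) = {0, 2 ^ (e - 1)}"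
proof -
  define h :: int where "h = 2 ^ (e - 1)"
  have d: "(2::int) ^ e = 2 * h" using assms unfolding h_def
    by (metis Suc_diff_1 power_Suc)
  have hp: "h > 0" by (simp add: h_def)
  have "j \<in> J (2 ^ e) \<longleftrightarrow> j = 0 \<or> j = h" for j
  proof
    assume "j \<in> J (2 ^ e)"
    then have j: "0 \<le> j" "j < 2 * h" "2 * h dvd 2 * j" by (simp_all add: J_def d)
    then have "h dvd j" by simp
    then obtain q where q: "j = h * q" by (elim dvdE)
    have "0 \<le> q" using j(1) hp q by (simp add: zero_le_mult_iff)
    moreover have "q < 2" using j(2) hp q by (simp add: mult_less_cancel_left)
    ultimately have "q = 0 \<or> q = 1" by auto
    then show "j = 0 \<or> j = h" using q by auto
  next
    assume "j = 0 \<or> j = h"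
    then show "j \<in> J (2 ^ e)" using hp by (auto simp: J_def d)
  qed
  then show ?thesis by (auto simp: h_def)
qed

lemma card_J: "card (J (2 ^ e)) = (if e = 0 then 1 else 2)"
  using J1 J2[of e] by (cases "e = 0") auto

lemma divs: "{d. d dvd (2::nat) ^ k} = (\<lambda>e. 2 ^ e) ` {..k}"
  using divides_primepow_nat[of 2] by auto

lemma inj2: "inj_on (\<lambda>e. (2::nat) ^ e) {..k}"
  by (auto simp: inj_on_def)

lemma card_params: "card (params (2 ^ k)) = (\<Sum>e\<le>k. (1 + 2 * 2 ^ e + (if e = 0 then 1 else 2) * (1 + 2 ^ e)))"
proof -
  have fin: "finite {d. d dvd (2::nat) ^ k}" by (simp add: divs)
  have "card (params (2 ^ k)) = (\<Sum>d\<in>{d. d dvd (2::nat) ^ k}. \<Sum>\<alpha>\<in>Aset d. card (Bset d \<alpha>))"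
    unfolding params_def
  proof (subst card_SigmaI)
    show "finite {d. d dvd (2::nat) ^ k}" by (rule fin)
    show "\<forall>a\<in>{d. d dvd 2 ^ k}. finite (Sigma (Aset a) (Bset a))"
      using finite_J by (auto simp: Aset_def Bset_def J_def)
    show "(\<Sum>a\<in>{d. d dvd 2 ^ k}. card (Sigma (Aset a) (Bset a))) = (\<Sum>d | d dvd 2 ^ k. \<Sum>\<alpha>\<in>Aset d. card (Bset d \<alpha>))"
    proof (rule sum.cong[OF refl])
      fix d
      show "card (Sigma (Aset d) (Bset d)) = (\<Sum>\<alpha>\<in>Aset d. card (Bset d \<alpha>))"
        by (rule card_SigmaI) (use finite_J in \<open>auto simp: Aset_def Bset_def J_def\<close>)
    qed
  qed
  also have "\<dots> = (\<Sum>e\<le>k. 1 + 2 * 2 ^ e + card (J (2 ^ e)) * (1 + 2 ^ e))"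
    unfolding divs by (subst sum.reindex[OF inj2]) (simp add: card_A)
  finally show ?thesis by (simp add: card_J)
qed


lemma arith_id: "int (\<Sum>e\<le>k. (1 + 2 * 2 ^ e + (if e = 0 then 1 else 2) * (1 + 2 ^ e)))
   = 5 * int (\<Sum>e\<le>k. (2::nat) ^ e) + 3 * int (k + 1) - 2 * int (2 ^ k) - 1"
proof (induction k)
  case 0 then show ?case by simp
next
  case (Suc k) then show ?case by (simp add: algebra_simps)
qed

theorem lemma2p3:
  fixes m n' :: nat
  assumes "m \<ge> 2" and "n' = 2 ^ (m - 1)"
  shows "int (card (subgroup_lattice (integer_mod_group 2 \<times>\<times> dihedral_group n'))) =
         5 * int (sum_divisors n') + 3 * int (num_divisors n') - 2 * int n' - 1"
proof -
  define k where "k = m - 1"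
  have n: "n' = 2 ^ k" using assms by (simp add: k_def)
  have c: "card (subgroup_lattice (GG n')) = (\<Sum>e\<le>k. (1 + 2 * 2 ^ e + (if e = 0 then 1 else 2) * (1 + 2 ^ e)))"
    using card_lattice[of n'] card_params[of k] n by simp
  have nd: "num_divisors n' = k + 1"
    unfolding num_divisors_def n divs by (simp add: card_image inj2)
  have sd: "sum_divisors n' = (\<Sum>e\<le>k. 2 ^ e)"
    unfolding sum_divisors_def n divs by (simp add: sum.reindex inj2)
  show ?thesis using c nd sd n arith_id[of k] by simp
qed



end
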